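(* Let $n\ge2$ and consider an equation $\sum_{i,j=1}^n f_{ij}({\bf p})u_{x_ix_j}=0$, ${\bf p}=(p^1,\dots,p^n)$, $p^i=u_{x_i}$, with $(f_{ij})$ symmetric and nondegenerate. The equation is linearizable by a transformation from the equivalence group $SL(n+1,\mathbb{R})$ if and only if there exist a covector $s_k({\bf p})$ such that the connection $\nabla$ with Christoffel symbols $\Gamma^i_{jk}=s_j\delta^i_k+s_k\delta^i_j$ is flat (zero curvature), and a covector $c_k({\bf p})$, such that $\nabla_kf_{ij}=c_kf_{ij}$.
   Context: The equivalence group consists of transformations $\tilde{\bf x}=C{\bf x}+bu$, $\tilde u=c{\bf x}+\beta u$ with the corresponding $(n+1)\times(n+1)$ matrix in $SL(n+1,\mathbb{R})$; they act on the row vector ${\bf p}$ projectively by $\tilde{\bf p}=\kappa{\bf p}C^{-1}+cC^{-1}$, $\kappa=1/\det(C+b{\bf p})$, and on $F=(f_{ij})$ by $\tilde F=\kappa^{-1}(C+b{\bf p})F(C+b{\bf p})^t$. Linearizable means that the transformed coefficient matrix is proportional (by a function) to a constant matrix. Here $\nabla_kf_{ij}=\partial_kf_{ij}-\Gamma^m_{ki}f_{mj}-\Gamma^m_{kj}f_{im}$ with $\partial_k=\partial/\partial p^k$. *)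

theory Defs
  imports "HOL-Analysis.Analysis"
begin

definition pd :: "'n::finite \<Rightarrow> (real^'n \<Rightarrow> real) \<Rightarrow> real^'n \<Rightarrow> real" where
  "pd k f p = frechet_derivative f (at p) (axis k 1)"

fun iter_pd :: "'n::finite list \<Rightarrow> (real^'n \<Rightarrow> real) \<Rightarrow> real^'n \<Rightarrow> real" where
  "iter_pd [] f = f"
| "iter_pd (k # ks) f = pd k (iter_pd ks f)"

definition smooth_fun_on :: "(real^'n::finite \<Rightarrow> real) \<Rightarrow> (real^'n) set \<Rightarrow> bool" where
  "smooth_fun_on f U \<longleftrightarrow> (\<forall>ks. \<forall>p\<in>U. iter_pd ks f differentiable (at p))"

definition kdelta :: "'n \<Rightarrow> 'n \<Rightarrow> real" where
  "kdelta i j = (if i = j then 1 else 0)"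

definition Gam :: "(real^'n \<Rightarrow> real^'n) \<Rightarrow> real^'n \<Rightarrow> 'n \<Rightarrow> 'n \<Rightarrow> 'n \<Rightarrow> real" where
  "Gam s p i j k = s p $ j * kdelta i k + s p $ k * kdelta i j"

definition curv :: "(real^'n::finite \<Rightarrow> real^'n) \<Rightarrow> real^'n \<Rightarrow> 'n \<Rightarrow> 'n \<Rightarrow> 'n \<Rightarrow> 'n \<Rightarrow> real" where
  "curv s p i j k l =
     pd k (\<lambda>q. Gam s q i l j) p - pd l (\<lambda>q. Gam s q i k j) p
     + (\<Sum>m\<in>UNIV. Gam s p i k m * Gam s p m l j)
     - (\<Sum>m\<in>UNIV. Gam s p i l m * Gam s p m k j)"

definition cov_deriv :: "(real^'n::finite \<Rightarrow> real^'n) \<Rightarrow> (real^'n \<Rightarrow> real^'n^'n)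
    \<Rightarrow> real^'n \<Rightarrow> 'n \<Rightarrow> 'n \<Rightarrow> 'n \<Rightarrow> real" where
  "cov_deriv s F p k i j =
     pd k (\<lambda>q. F q $ i $ j) p
     - (\<Sum>m\<in>UNIV. Gam s p m k i * F p $ m $ j)
     - (\<Sum>m\<in>UNIV. Gam s p m k j * F p $ i $ m)"

text \<open>The (n+1)x(n+1) matrix of the transformation
  x~ = C x + b u, u~ = c x + beta u, indexed by 'n + unit (last index = u).\<close>
definition block_mat :: "real^'n^'n \<Rightarrow> real^'n \<Rightarrow> real^'n \<Rightarrow> real
    \<Rightarrow> real^('n + unit)^('n + unit)" where
  "block_mat C b c \<beta> = (\<chi> r t. case r of
       Inl i \<Rightarrow> (case t of Inl j \<Rightarrow> C $ i $ j | Inr _ \<Rightarrow> b $ i)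
     | Inr _ \<Rightarrow> (case t of Inl j \<Rightarrow> c $ j | Inr _ \<Rightarrow> \<beta>))"

definition Cbp :: "real^'n^'n \<Rightarrow> real^'n \<Rightarrow> real^'n \<Rightarrow> real^'n^'n" where
  "Cbp C b p = (\<chi> i j. C $ i $ j + b $ i * p $ j)"

definition transf_coeff :: "real^'n^'n \<Rightarrow> real^'n \<Rightarrow> real^'n^'n \<Rightarrow> real^'n \<Rightarrow> real^'n^'n" where
  "transf_coeff C b Fp p = det (Cbp C b p) *\<^sub>R (Cbp C b p ** Fp ** transpose (Cbp C b p))"

text \<open>Linearizable near p0 by an element of SL(n+1,R): on a neighbourhood V of p0
  the transformed coefficient matrix is a function multiple of a constant matrix A.\<close>
definition linearizable_near :: "(real^'n::finite \<Rightarrow> real^'n^'n) \<Rightarrow> (real^'n) set \<Rightarrow> real^'n \<Rightarrow> bool" where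
  "linearizable_near F U p0 \<longleftrightarrow>
     (\<exists>V. open V \<and> p0 \<in> V \<and> V \<subseteq> U \<and>
       (\<exists>C b c \<beta>. det (block_mat C b c \<beta>) = 1 \<and>
         (\<exists>(A::real^'n^'n) (mu::real^'n \<Rightarrow> real). \<forall>p\<in>V.
             det (Cbp C b p) \<noteq> 0 \<and> transf_coeff C b (F p) p = mu p *\<^sub>R A)))"

end

theory Submission
  imports Defs
begin

lemma pd_has: "(f has_derivative f') (at p) \<Longrightarrow> pd k f p = f' (axis k 1)"
  unfolding pd_def using frechet_derivative_at by metis

lemma pd_local:
  assumes "open S" "p \<in> S" "\<And>q. q \<in> S \<Longrightarrow> f q = g q"
  shows "pd k f p = pd k g p"
proof -
  have "\<And>f'. (f has_derivative f') (at p) \<longleftrightarrow> (g has_derivative f') (at p)"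
  proof
    fix f' assume "(f has_derivative f') (at p)"
    then show "(g has_derivative f') (at p)"
      by (rule has_derivative_transform_within_open[OF _ assms(1,2)]) (simp add: assms(3))
  next
    fix f' assume "(g has_derivative f') (at p)"
    then show "(f has_derivative f') (at p)"
      by (rule has_derivative_transform_within_open[OF _ assms(1,2)]) (simp add: assms(3))
  qed
  then show ?thesis unfolding pd_def frechet_derivative_def by simp
qed

lemma diff_local:
  assumes "open S" "p \<in> S" "\<And>q. q \<in> S \<Longrightarrow> f q = g q" "f differentiable at p"
  shows "g differentiable at p"
proof -
  obtain f' where "(f has_derivative f') (at p)" using assms(4) unfolding differentiable_def by blast
  then have "(g has_derivative f') (at p)"
    by (rule has_derivative_transform_within_open[OF _ assms(1,2)]) (simp add: assms(3))
  then show ?thesis unfolding differentiable_def by blast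
qed

lemma iter_pd_local:
  assumes "open S" "\<And>q. q \<in> S \<Longrightarrow> f q = g q" "q \<in> S"
  shows "iter_pd ks f q = iter_pd ks g q"
  using assms(3)
proof (induction ks arbitrary: q)
  case Nil then show ?case using assms by simp
next
  case (Cons k ks)
  then show ?case using pd_local[OF assms(1) Cons(2), of "iter_pd ks f" "iter_pd ks g"] by simp
qed

lemma iter_pd_append: "iter_pd (ks @ [k]) f = iter_pd ks (pd k f)"
  by (induction ks) auto

lemma pd_diffw: "f differentiable at p \<Longrightarrow> (f has_derivative (frechet_derivative f (at p))) (at p)"
  using frechet_derivative_works by blast

lemma pd_add:
  assumes "f differentiable at p" "g differentiable at p"
  shows "pd k (\<lambda>q. f q + g q) p = pd k f p + pd k g p"
  using pd_has[OF has_derivative_add[OF pd_diffw[OF assms(1)] pd_diffw[OF assms(2)]]]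
  unfolding pd_def by simp

lemma pd_mult:
  fixes f g :: "real^'n::finite \<Rightarrow> real"
  assumes "f differentiable at p" "g differentiable at p"
  shows "pd k (\<lambda>q. f q * g q) p = pd k f p * g p + f p * pd k g p"
  using pd_has[OF has_derivative_mult[OF pd_diffw[OF assms(1)] pd_diffw[OF assms(2)]]]
  unfolding pd_def by simp

lemma pd_const: "pd k (\<lambda>q. c) p = 0"
proof -
  have "pd k (\<lambda>q. c) p = (\<lambda>h. 0) (axis k 1)" by (rule pd_has) (rule has_derivative_const)
  then show ?thesis by simp
qed

lemma iter_pd_const: "iter_pd ks (\<lambda>q. c) = (\<lambda>q. if ks = [] then c else 0)"
  by (induction ks) (simp_all add: pd_const)

definition Sn :: "nat \<Rightarrow> (real^'n::finite) set \<Rightarrow> (real^'n \<Rightarrow> real) \<Rightarrow> bool" where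
  "Sn n V f \<longleftrightarrow> (\<forall>ks. length ks \<le> n \<longrightarrow> (\<forall>p\<in>V. iter_pd ks f differentiable at p))"

lemma Sn_mono: "Sn n V f \<Longrightarrow> m \<le> n \<Longrightarrow> Sn m V f"
  unfolding Sn_def by auto

lemma Sn_pd: fixes f :: "real^'n::finite \<Rightarrow> real" shows "Sn (Suc n) V f \<Longrightarrow> Sn n V (pd k f)"
  unfolding Sn_def
proof (intro allI impI ballI)
  fix ks :: "'n list" and p assume "\<forall>ks. length ks \<le> Suc n \<longrightarrow> (\<forall>p\<in>V. iter_pd ks f differentiable at p)"
     "length ks \<le> n" "p \<in> V"
  then show "iter_pd ks (pd k f) differentiable at p"
  proof -
    assume a: "\<forall>ks. length ks \<le> Suc n \<longrightarrow> (\<forall>p\<in>V. iter_pd ks f differentiable at p)"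
      "length ks \<le> n" "p \<in> V"
    have "iter_pd (ks @ [k]) f differentiable at p" using a by simp
    then show ?thesis by (simp add: iter_pd_append)
  qed
qed

lemma Sn_const: "Sn n V (\<lambda>q. c)"
  unfolding Sn_def iter_pd_const by simp

lemma iter_pd_add:
  fixes f g :: "real^'n::finite \<Rightarrow> real" and ks :: "'n list"
  assumes "open V" "Sn (length ks) V f" "Sn (length ks) V g" "p \<in> V"
  shows "iter_pd ks (\<lambda>q. f q + g q) p = iter_pd ks f p + iter_pd ks g p"
  using assms(2-4)
proof (induction ks arbitrary: p)
  case Nil then show ?case by simp
next
  case (Cons k ks)
  have fs: "Sn (length ks) V f" "Sn (length ks) V g"
    using Sn_mono[OF Cons.prems(1)] Sn_mono[OF Cons.prems(2)] by auto
  have "iter_pd (k # ks) (\<lambda>q. f q + g q) p = pd k (\<lambda>q. iter_pd ks f q + iter_pd ks g q) p"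
    using pd_local[OF assms(1) Cons.prems(3), of "iter_pd ks (\<lambda>q. f q + g q)"] Cons.IH[OF fs] by simp
  also have "\<dots> = iter_pd (k # ks) f p + iter_pd (k # ks) g p"
    using Cons.prems unfolding Sn_def by (simp add: pd_add)
  finally show ?case .
qed

lemma Sn_add:
  fixes f g :: "real^'n::finite \<Rightarrow> real"
  assumes "open V" "Sn n V f" "Sn n V g"
  shows "Sn n V (\<lambda>q. f q + g q)"
  unfolding Sn_def
proof (intro allI impI ballI)
  fix ks :: "'n list" and p assume ks: "length ks \<le> n" and p: "p \<in> V"
  have fs: "Sn (length ks) V f" "Sn (length ks) V g" using Sn_mono[OF assms(2) ks] Sn_mono[OF assms(3) ks] by auto
  have "(\<lambda>q. iter_pd ks f q + iter_pd ks g q) differentiable at p"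
    using assms(2,3) ks p unfolding Sn_def by (auto intro!: differentiable_add)
  then show "iter_pd ks (\<lambda>q. f q + g q) differentiable at p"
    by (rule diff_local[OF assms(1) p, rotated]) (rule iter_pd_add[OF assms(1) fs, symmetric])
qed

lemma Sn_mult:
  fixes f g :: "real^'n::finite \<Rightarrow> real"
  assumes "open V"
  shows "Sn n V f \<Longrightarrow> Sn n V g \<Longrightarrow> Sn n V (\<lambda>q. f q * g q)"
proof (induction n arbitrary: f g)
  case 0
  then show ?case unfolding Sn_def by (auto intro: differentiable_mult)
next
  case (Suc n)
  show ?case unfolding Sn_def
  proof (intro allI impI ballI)
    fix ks :: "'n list" and p assume ks: "length ks \<le> Suc n" and p: "p \<in> V"
    show "iter_pd ks (\<lambda>q. f q * g q) differentiable at p"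
    proof (cases ks rule: rev_exhaust)
      case Nil
      have "f differentiable at p"
        using Suc.prems(1) p unfolding Sn_def by (drule_tac x="[]" in spec, simp)
      moreover have "g differentiable at p"
        using Suc.prems(2) p unfolding Sn_def by (drule_tac x="[]" in spec, simp)
      ultimately show ?thesis using Nil by (simp add: differentiable_mult)
    next
      case (snoc ks' k)
      have l: "length ks' \<le> n" using ks snoc by simp
      have d0: "\<forall>q\<in>V. f differentiable at q" "\<forall>q\<in>V. g differentiable at q"
        using Suc.prems(1) unfolding Sn_def apply (drule_tac x="[]" in spec, simp)
        using Suc.prems(2) unfolding Sn_def apply (drule_tac x="[]" in spec, simp)
        done
      have eq: "pd k (\<lambda>q. f q * g q) q = pd k f q * g q + f q * pd k g q" if "q \<in> V" for q
        using pd_mult d0 that by blast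
      have S1: "Sn n V (\<lambda>q. pd k f q * g q)"
        using Suc.IH[OF Sn_pd[OF Suc.prems(1)] Sn_mono[OF Suc.prems(2)]] by simp
      have S2: "Sn n V (\<lambda>q. f q * pd k g q)"
        using Suc.IH[OF Sn_mono[OF Suc.prems(1)] Sn_pd[OF Suc.prems(2)]] by simp
      have S: "Sn n V (\<lambda>q. pd k f q * g q + f q * pd k g q)"
        using Sn_add[OF assms S1 S2] .
      have "iter_pd ks' (\<lambda>q. pd k f q * g q + f q * pd k g q) differentiable at p"
        using S l p unfolding Sn_def by auto
      then have "iter_pd ks' (pd k (\<lambda>q. f q * g q)) differentiable at p"
        by (rule diff_local[OF assms p, rotated]) (rule iter_pd_local[OF assms _ _, symmetric], simp add: eq)
      then show ?thesis using snoc by (simp add: iter_pd_append)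
    qed
  qed
qed

lemma smooth_riccati:
  fixes s :: "real^'n::finite \<Rightarrow> real^'n"
  assumes V: "open V"
    and d: "\<And>k p. p \<in> V \<Longrightarrow> (\<lambda>q. s q $ k) differentiable at p"
    and r: "\<And>j k p. p \<in> V \<Longrightarrow> pd j (\<lambda>q. s q $ k) p = s p $ j * s p $ k"
  shows "smooth_fun_on (\<lambda>p. s p $ k) V"
proof -
  have "\<forall>k. Sn n V (\<lambda>q. s q $ k)" for n
  proof (induction n)
    case 0
    then show ?case using d unfolding Sn_def by auto
  next
    case (Suc n)
    show ?case
    proof (intro allI)
      fix k
      show "Sn (Suc n) V (\<lambda>q. s q $ k)"
        unfolding Sn_def
      proof (intro allI impI ballI)
        fix ks :: "'n list" and p assume ks: "length ks \<le> Suc n" and p: "p \<in> V"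
        show "iter_pd ks (\<lambda>q. s q $ k) differentiable at p"
        proof (cases ks rule: rev_exhaust)
          case Nil then show ?thesis using d p by simp
        next
          case (snoc ks' j)
          have S: "Sn n V (\<lambda>q. s q $ j * s q $ k)" using Sn_mult[OF V] Suc.IH by blast
          have "iter_pd ks' (\<lambda>q. s q $ j * s q $ k) differentiable at p"
            using S ks snoc p unfolding Sn_def by auto
          then have "iter_pd ks' (pd j (\<lambda>q. s q $ k)) differentiable at p"
            by (rule diff_local[OF V p, rotated]) (rule iter_pd_local[OF V _ _, symmetric], simp add: r)
          then show ?thesis using snoc by (simp add: iter_pd_append)
        qed
      qed
    qed
  qed
  then show ?thesis unfolding smooth_fun_on_def Sn_def by (meson le_refl)
qed



lemma pd_lin:
  fixes f g :: "real^'n::finite \<Rightarrow> real"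
  assumes "f differentiable at p" "g differentiable at p"
  shows "pd k (\<lambda>q. f q * a + g q * b) p = pd k f p * a + pd k g p * b"
proof -
  have "((\<lambda>q. f q * a + g q * b) has_derivative
     (\<lambda>h. frechet_derivative f (at p) h * a + frechet_derivative g (at p) h * b)) (at p)"
    by (intro has_derivative_add has_derivative_mult_left pd_diffw assms)
  from pd_has[OF this] show ?thesis unfolding pd_def by simp
qed

lemma gam_sum:
  "(\<Sum>m\<in>UNIV. Gam s p i k m * Gam s p m l j) =
     s p$k * s p$l * kdelta i j + s p$k * s p$j * kdelta i l + 2 * s p$j * s p$l * kdelta i k"
  by (simp add: Gam_def kdelta_def distrib_left distrib_right sum.distrib
      if_distrib[of "\<lambda>t. t * _"] if_distrib[of "\<lambda>t. _ * t"] cong: if_cong)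

lemma curv_formula:
  fixes s :: "real^'n::finite \<Rightarrow> real^'n"
  assumes d: "\<And>k. (\<lambda>q. s q $ k) differentiable at p"
  shows "curv s p i j k l =
    (pd k (\<lambda>q. s q $ l) p - pd l (\<lambda>q. s q $ k) p) * kdelta i j
    + (pd k (\<lambda>q. s q $ j) p - s p $ k * s p $ j) * kdelta i l
    - (pd l (\<lambda>q. s q $ j) p - s p $ l * s p $ j) * kdelta i k"
proof -
  have g1: "(\<lambda>q. Gam s q i l j) = (\<lambda>q. s q $ l * kdelta i j + s q $ j * kdelta i l)"
    by (simp add: Gam_def fun_eq_iff)
  have g2: "(\<lambda>q. Gam s q i k j) = (\<lambda>q. s q $ k * kdelta i j + s q $ j * kdelta i k)"
    by (simp add: Gam_def fun_eq_iff)
  show ?thesis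
    unfolding curv_def g1 g2 gam_sum pd_lin[OF d d]
    by (simp add: algebra_simps)
qed

lemma curv_zero_riccati:
  fixes s :: "real^'n::finite \<Rightarrow> real^'n"
  assumes d: "\<And>k. (\<lambda>q. s q $ k) differentiable at p"
    and r: "\<And>j k. pd j (\<lambda>q. s q $ k) p = s p $ j * s p $ k"
  shows "curv s p i j k l = 0"
  unfolding curv_formula[OF d] r by (simp add: algebra_simps)

lemma exists_other:
  fixes j :: "'n::finite"
  assumes "CARD('n) \<ge> 2"
  obtains i where "i \<noteq> j"
proof -
  have "UNIV \<noteq> {j}"
  proof
    assume u: "UNIV = {j}"
    have "CARD('n) = card {j}" by (simp only: u)
    then have "CARD('n) = 1" by simp
    then show False using assms by simp
  qed
  then show ?thesis using that by blast
qed

lemma riccati_from_curv: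
  fixes s :: "real^'n::finite \<Rightarrow> real^'n"
  assumes c2: "CARD('n) \<ge> 2"
    and d: "\<And>k. (\<lambda>q. s q $ k) differentiable at p"
    and z: "\<And>i j k l. curv s p i j k l = 0"
  shows "pd j (\<lambda>q. s q $ k) p = s p $ j * s p $ k"
proof (cases "j = k")
  case True
  obtain i where i: "i \<noteq> j" using exists_other[OF c2] by blast
  have "curv s p i j j i = 0" by (rule z)
  then show ?thesis unfolding curv_formula[OF d] using True i by (simp add: kdelta_def)
next
  case False
  have 1: "curv s p k k j k = 0" by (rule z)
  have 2: "curv s p j j k j = 0" by (rule z)
  have kd: "kdelta k k = 1" "kdelta j j = 1" "kdelta k j = 0" "kdelta j k = 0"
    using False by (auto simp: kdelta_def)
  from 1 have a: "2 * pd j (\<lambda>q. s q $ k) p - pd k (\<lambda>q. s q $ j) p - s p $ j * s p $ k = 0"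
    unfolding curv_formula[OF d] kd by simp
  from 2 have b: "2 * pd k (\<lambda>q. s q $ j) p - pd j (\<lambda>q. s q $ k) p - s p $ j * s p $ k = 0"
    unfolding curv_formula[OF d] kd by (simp add: mult.commute)
  from a b show ?thesis by linarith
qed



definition dmat :: "'n::finite \<Rightarrow> (real^'n \<Rightarrow> real^'m::finite^'l::finite) \<Rightarrow> real^'n \<Rightarrow> real^'m^'l" where
  "dmat k X p = (\<chi> i j. pd k (\<lambda>q. X q $ i $ j) p)"

definition outer :: "real^'l::finite \<Rightarrow> real^'m::finite \<Rightarrow> real^'m^'l" where
  "outer u w = (\<chi> i j. u $ i * w $ j)"

lemma mm_add_r: "((A::real^'m::finite^'l::finite) + B) ** (C::real^'r::finite^'m) = A ** C + B ** C"
  by (simp add: vec_eq_iff matrix_matrix_mult_def distrib_right sum.distrib)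

lemma mm_sub_r: "((A::real^'m::finite^'l::finite) - B) ** (C::real^'r::finite^'m) = A ** C - B ** C"
  by (simp add: vec_eq_iff matrix_matrix_mult_def left_diff_distrib sum_subtractf)

lemma mm_sub_l: "(A::real^'m::finite^'l::finite) ** ((B::real^'r::finite^'m) - C) = A ** B - A ** C"
  by (simp add: vec_eq_iff matrix_matrix_mult_def right_diff_distrib sum_subtractf)

lemma outer_mul_left: "outer u w ** A = outer u (transpose A *v w)"
  by (simp add: vec_eq_iff outer_def matrix_matrix_mult_def matrix_vector_mult_def transpose_def
      sum_distrib_left mult_ac)

lemma outer_mul_right: "A ** outer u w = outer (A *v u) w"
  by (simp add: vec_eq_iff outer_def matrix_matrix_mult_def matrix_vector_mult_def
      sum_distrib_right sum_distrib_left mult_ac)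

lemma outer_transpose: "transpose (outer u w) = outer w u"
  by (simp add: vec_eq_iff outer_def transpose_def)

lemma outer_neg_left: "outer (- u) w = - outer u w"
  by (simp add: vec_eq_iff outer_def)

lemma outer_neg_right: "outer u (- w) = - outer u w"
  by (simp add: vec_eq_iff outer_def)

lemma has_derivative_entry:
  assumes "(\<lambda>q. X q $ i $ j) differentiable at p"
  shows "((\<lambda>q. X q $ i $ j) has_derivative (\<lambda>h. frechet_derivative (\<lambda>q. X q $ i $ j) (at p) h)) (at p)"
  using pd_diffw[OF assms] by simp

lemma matmul_entry_diff:
  fixes A :: "real^'n::finite \<Rightarrow> real^'m::finite^'l::finite" and B :: "real^'n \<Rightarrow> real^'r::finite^'m"
  assumes dA: "\<And>i j. (\<lambda>q. A q $ i $ j) differentiable at p"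
    and dB: "\<And>i j. (\<lambda>q. B q $ i $ j) differentiable at p"
  shows "((\<lambda>q. (A q ** B q) $ i $ j) has_derivative
     (\<lambda>h. \<Sum>m\<in>UNIV. A p $ i $ m * frechet_derivative (\<lambda>q. B q $ m $ j) (at p) h
        + frechet_derivative (\<lambda>q. A q $ i $ m) (at p) h * B p $ m $ j)) (at p)"
proof -
  have e: "(\<lambda>q. (A q ** B q) $ i $ j) = (\<lambda>q. \<Sum>m\<in>UNIV. A q $ i $ m * B q $ m $ j)"
    by (simp add: matrix_matrix_mult_def)
  show ?thesis unfolding e
    by (intro has_derivative_sum has_derivative_mult pd_diffw dA dB)
qed

lemma matmul_diff:
  fixes A :: "real^'n::finite \<Rightarrow> real^'m::finite^'l::finite" and B :: "real^'n \<Rightarrow> real^'r::finite^'m"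
  assumes dA: "\<And>i j. (\<lambda>q. A q $ i $ j) differentiable at p"
    and dB: "\<And>i j. (\<lambda>q. B q $ i $ j) differentiable at p"
  shows "(\<lambda>q. (A q ** B q) $ i $ j) differentiable at p"
  using matmul_entry_diff[OF dA dB] unfolding differentiable_def by blast

lemma dmat_mul:
  fixes A :: "real^'n::finite \<Rightarrow> real^'m::finite^'l::finite" and B :: "real^'n \<Rightarrow> real^'r::finite^'m"
  assumes dA: "\<And>i j. (\<lambda>q. A q $ i $ j) differentiable at p"
    and dB: "\<And>i j. (\<lambda>q. B q $ i $ j) differentiable at p"
  shows "dmat k (\<lambda>q. A q ** B q) p = dmat k A p ** B p + A p ** dmat k B p"
proof -
  have "pd k (\<lambda>q. (A q ** B q) $ i $ j) p = (dmat k A p ** B p + A p ** dmat k B p) $ i $ j" for i j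
    using pd_has[OF matmul_entry_diff[OF dA dB, of i j], of k]
    by (simp add: dmat_def pd_def matrix_matrix_mult_def sum.distrib add.commute)
  then show ?thesis by (simp add: vec_eq_iff dmat_def)
qed

lemma transpose_diff:
  assumes "\<And>i j. (\<lambda>q. A q $ i $ j) differentiable at p"
  shows "(\<lambda>q. transpose (A q) $ i $ j) differentiable at p"
  using assms by (simp add: transpose_def)

lemma dmat_transpose: "dmat k (\<lambda>q. transpose (A q)) p = transpose (dmat k A p)"
  by (simp add: vec_eq_iff dmat_def transpose_def)

lemma Cbp_entry_has_derivative:
  "((\<lambda>q. Cbp C b q $ i $ j) has_derivative (\<lambda>h. b $ i * h $ j)) (at p)"
proof -
  have e: "(\<lambda>q. Cbp C b q $ i $ j) = (\<lambda>q. C $ i $ j + b $ i * q $ j)"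
    by (simp add: Cbp_def)
  have "((\<lambda>q. q $ j) has_derivative (\<lambda>h. h $ j)) (at p)"
    by (rule bounded_linear_imp_has_derivative) (rule bounded_linear_vec_nth)
  then have "((\<lambda>q. C $ i $ j + b $ i * q $ j) has_derivative (\<lambda>h. 0 + b $ i * h $ j)) (at p)"
    by (intro has_derivative_add has_derivative_const has_derivative_mult_right)
  then show ?thesis unfolding e by simp
qed

lemma Cbp_diff: "(\<lambda>q. Cbp C b q $ i $ j) differentiable at p"
  using Cbp_entry_has_derivative unfolding differentiable_def by blast

lemma dmat_Cbp: "dmat k (\<lambda>q. Cbp C b q) p = outer b (axis k 1)"
  by (simp add: vec_eq_iff dmat_def outer_def pd_has[OF Cbp_entry_has_derivative])

definition Hm :: "real^'n^'n \<Rightarrow> real^'n \<Rightarrow> (real^'n::finite \<Rightarrow> real^'n^'n) \<Rightarrow> real^'n \<Rightarrow> real^'n^'n" where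
  "Hm C b F q = Cbp C b q ** F q ** transpose (Cbp C b q)"

lemma Hm_diff:
  assumes dF: "\<And>i j. (\<lambda>q. F q $ i $ j) differentiable at p"
  shows "(\<lambda>q. Hm C b F q $ i $ j) differentiable at p"
  unfolding Hm_def
  by (intro matmul_diff transpose_diff Cbp_diff dF)

lemma transpose_axis_mul: "transpose A *v axis k 1 = A $ k"
  by (simp add: vec_eq_iff transpose_def matrix_vector_mult_def axis_def
      if_distrib[of "\<lambda>t. _ * t"] cong: if_cong)

lemma axis_mul: "A *v axis k 1 = column k A"
  by (simp add: vec_eq_iff column_def matrix_vector_mult_def axis_def
      if_distrib[of "\<lambda>t. _ * t"] cong: if_cong)

lemma row_eq: "row k A = A $ k"
  by (simp add: row_def vec_eq_iff)

lemma col_mul: "column k (A ** B) = A *v column k B"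
  by (simp add: column_def matrix_matrix_mult_def matrix_vector_mult_def vec_eq_iff)

lemma dH_formula:
  fixes F :: "real^'n::finite \<Rightarrow> real^'n^'n"
  assumes dF: "\<And>i j. (\<lambda>q. F q $ i $ j) differentiable at p"
    and Ms: "Cbp C b p *v s = - b"
  shows "dmat k (Hm C b F) p - \<rho> *\<^sub>R Hm C b F p =
    Cbp C b p ** (dmat k F p - (\<rho> *\<^sub>R F p + outer s (F p $ k) + outer (column k (F p)) s))
      ** transpose (Cbp C b p)"
proof -
  let ?M = "Cbp C b p"
  have dMF: "\<And>i j. (\<lambda>q. (Cbp C b q ** F q) $ i $ j) differentiable at p"
    by (intro matmul_diff Cbp_diff dF)
  have "dmat k (Hm C b F) p = dmat k (\<lambda>q. Cbp C b q ** F q) p ** transpose ?M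
       + (?M ** F p) ** dmat k (\<lambda>q. transpose (Cbp C b q)) p"
    unfolding Hm_def by (rule dmat_mul[OF dMF transpose_diff[OF Cbp_diff]])
  also have "\<dots> = (outer b (axis k 1) ** F p + ?M ** dmat k F p) ** transpose ?M
       + (?M ** F p) ** outer (axis k 1) b"
    unfolding dmat_mul[OF Cbp_diff dF] dmat_transpose dmat_Cbp outer_transpose ..
  also have "\<dots> = outer b (?M *v (F p $ k)) + ?M ** dmat k F p ** transpose ?M
       + outer (?M *v column k (F p)) b"
    by (simp add: mm_add_r outer_mul_left outer_mul_right transpose_axis_mul
        matrix_vector_mul_assoc[symmetric] axis_mul row_eq col_mul)
  finally have dH: "dmat k (Hm C b F) p = outer b (?M *v (F p $ k)) + ?M ** dmat k F p ** transpose ?M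
       + outer (?M *v column k (F p)) b" .
  have "?M ** (dmat k F p - (\<rho> *\<^sub>R F p + outer s (F p $ k) + outer (column k (F p)) s))
      ** transpose ?M
    = ?M ** dmat k F p ** transpose ?M - \<rho> *\<^sub>R Hm C b F p
      - outer (?M *v s) (?M *v (F p $ k)) - outer (?M *v column k (F p)) (?M *v s)"
    by (simp add: Hm_def mm_sub_l matrix_add_ldistrib mm_sub_r
        mm_add_r matrix_scalar_ac scalar_matrix_assoc matrix_mul_assoc
        outer_mul_left outer_mul_right)
  then show ?thesis unfolding dH Ms outer_neg_left outer_neg_right by simp
qed

lemma cancel_congr:
  fixes M X :: "real^'n::finite^'n"
  assumes "invertible M" "M ** X ** transpose M = 0"
  shows "X = 0"
proof -
  obtain Mi where a: "M ** Mi = mat 1" and b: "Mi ** M = mat 1"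
    using assms(1) unfolding invertible_def by blast
  have "X = (Mi ** M) ** X ** transpose (Mi ** M)" using b by (simp add: transpose_mat)
  also have "\<dots> = Mi ** (M ** X ** transpose M) ** transpose Mi"
    by (simp add: matrix_transpose_mul matrix_mul_assoc)
  also have "\<dots> = 0" using assms(2) by simp
  finally show ?thesis .
qed



lemma cov_formula:
  "cov_deriv s F p k i j = pd k (\<lambda>q. F q $ i $ j) p - 2 * s p $ k * F p $ i $ j
     - s p $ i * F p $ k $ j - s p $ j * F p $ i $ k"
  by (simp add: cov_deriv_def Gam_def kdelta_def distrib_left distrib_right sum.distrib
      if_distrib[of "\<lambda>t. t * _"] if_distrib[of "\<lambda>t. _ * t"] cong: if_cong)

lemma X_zero_iff:
  "(dF - (\<rho> *\<^sub>R F + outer s (F $ k) + outer (column k F) s) = 0) \<longleftrightarrow>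
   (\<forall>i j. dF $ i $ j = \<rho> * F $ i $ j + s $ i * F $ k $ j + F $ i $ k * s $ j)"
  by (simp add: vec_eq_iff outer_def column_def)

lemma invertible_Mi:
  "invertible M \<Longrightarrow> M ** matrix_inv M = mat 1 \<and> matrix_inv M ** M = mat 1"
  unfolding invertible_def matrix_inv_def by (rule someI_ex)

lemma mv_scaleR: "(A::real^'m::finite^'l::finite) *v (c *\<^sub>R x) = c *\<^sub>R (A *v x)"
  by (simp add: vec_eq_iff matrix_vector_mult_def sum_distrib_left mult_ac)

lemma Cbp_mv:
  "Cbp C b x *v v = Cbp C b q *v v + (\<Sum>j\<in>UNIV. v$j * (x$j - q$j)) *\<^sub>R b"
  by (simp add: vec_eq_iff Cbp_def matrix_vector_mult_def algebra_simps sum.distrib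
      sum_subtractf sum_distrib_left sum_distrib_right)

lemma pd_cmult:
  fixes f :: "real^'n::finite \<Rightarrow> real"
  assumes "f differentiable at p"
  shows "pd k (\<lambda>q. a * f q) p = a * pd k f p"
proof -
  have "((\<lambda>q. a * f q) has_derivative (\<lambda>h. a * frechet_derivative f (at p) h)) (at p)"
    by (intro has_derivative_mult_right pd_diffw assms)
  from pd_has[OF this] show ?thesis unfolding pd_def by simp
qed

lemma mat1_nz: "(mat 1 :: real^'n::finite^'n) \<noteq> 0"
proof
  assume "(mat 1 :: real^'n^'n) = 0"
  then have "(mat 1 :: real^'n^'n) $ undefined $ undefined = 0" by simp
  then show False by (simp add: mat_def)
qed

text \<open>Local rational form of s.\<close>

lemma local_s:
  fixes s :: "real^'n::finite \<Rightarrow> real^'n"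
  assumes V: "open V" and q: "q \<in> V"
    and Ms: "\<And>x. x \<in> V \<Longrightarrow> Cbp C b x *v s x = - b"
    and inv: "\<And>x. x \<in> V \<Longrightarrow> invertible (Cbp C b x)"
  shows "(\<lambda>x. s x $ k) differentiable at q \<and> pd j (\<lambda>x. s x $ k) q = s q $ j * s q $ k"
proof -
  define v where "v = s q"
  define g where "g x = 1 - (\<Sum>m\<in>UNIV. v$m * (x$m - q$m))" for x :: "real^'n"
  define W where "W = V \<inter> {x. 0 < g x}"
  have gc: "continuous_on UNIV g" unfolding g_def by (intro continuous_intros)
  have W: "open W" unfolding W_def
    by (intro open_Int V open_Collect_less continuous_on_const gc)
  have gq: "g q = 1" by (simp add: g_def)
  have qW: "q \<in> W" using q gq by (simp add: W_def)
  have rep: "s x $ k = v $ k / g x" if x: "x \<in> W" for x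
  proof -
    have xV: "x \<in> V" and gx: "g x \<noteq> 0" using x by (auto simp: W_def)
    have mq: "Cbp C b q *v v = - b" unfolding v_def by (rule Ms[OF q])
    have "Cbp C b x *v v = - b + (1 - g x) *\<^sub>R b"
      using Cbp_mv[of C b x v q] mq by (simp add: g_def)
    then have "Cbp C b x *v v = - (g x *\<^sub>R b)" by (simp add: algebra_simps)
    then have "Cbp C b x *v ((1 / g x) *\<^sub>R v) = - b"
      using gx by (simp add: mv_scaleR)
    then have "Cbp C b x *v ((1 / g x) *\<^sub>R v) = Cbp C b x *v s x" using Ms[OF xV] by simp
    then have "(1 / g x) *\<^sub>R v = s x"
      using inj_matrix_vector_mult[OF inv[OF xV]] unfolding inj_def by blast
    then have "s x $ k = ((1 / g x) *\<^sub>R v) $ k" by simp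
    then show ?thesis by (simp add: divide_inverse mult.commute)
  qed
  have dnth: "((\<lambda>x. x $ m) has_derivative (\<lambda>h. h $ m)) (at q)" for m
    by (rule bounded_linear_imp_has_derivative) (rule bounded_linear_vec_nth)
  have dg: "(g has_derivative (\<lambda>h. 0 - (\<Sum>m\<in>UNIV. v$m * (h$m - 0)))) (at q)"
    unfolding g_def
    by (intro has_derivative_diff has_derivative_const has_derivative_sum has_derivative_mult_right dnth)
  have df: "((\<lambda>x. v $ k / g x) has_derivative
      (\<lambda>h. (0 * g q - v $ k * (0 - (\<Sum>m\<in>UNIV. v$m * (h$m - 0)))) / (g q * g q))) (at q)"
    by (rule has_derivative_divide'[OF has_derivative_const dg]) (simp add: gq)
  have sum_axis: "(\<Sum>m\<in>UNIV. v$m * (axis j 1 $ m)) = v $ j"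
    by (simp add: axis_def if_distrib[of "\<lambda>t. _ * t"] cong: if_cong)
  have pdv: "pd j (\<lambda>x. v $ k / g x) q = v $ k * v $ j"
    using pd_has[OF df, of j] sum_axis by (simp add: gq)
  have eqW: "\<And>x. x \<in> W \<Longrightarrow> v $ k / g x = s x $ k" using rep by simp
  have d0: "(\<lambda>x. v $ k / g x) differentiable at q" using df unfolding differentiable_def by blast
  have "(\<lambda>x. s x $ k) differentiable at q" by (rule diff_local[OF W qW _ d0]) (simp add: eqW)
  moreover have "pd j (\<lambda>x. s x $ k) q = pd j (\<lambda>x. v $ k / g x) q"
    by (rule pd_local[OF W qW]) (rule rep)
  then have "pd j (\<lambda>x. s x $ k) q = s q $ j * s q $ k"
    using pdv by (simp add: v_def mult.commute)
  ultimately show ?thesis by blast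
qed

lemma forward:
  fixes F :: "real^'n::finite \<Rightarrow> real^'n^'n"
  assumes V: "open V"
    and dM: "\<And>p. p \<in> V \<Longrightarrow> det (Cbp C b p) \<noteq> 0"
    and tc: "\<And>p. p \<in> V \<Longrightarrow> transf_coeff C b (F p) p = mu p *\<^sub>R A"
    and dF: "\<And>p i j. p \<in> V \<Longrightarrow> (\<lambda>q. F q $ i $ j) differentiable at p"
    and detF: "\<And>p. p \<in> V \<Longrightarrow> det (F p) \<noteq> 0"
    and ne: "V \<noteq> {}"
  shows "\<exists>s :: real^'n \<Rightarrow> real^'n. (\<forall>k. smooth_fun_on (\<lambda>p. s p $ k) V) \<and>
         (\<forall>p\<in>V. \<forall>i j k l. curv s p i j k l = 0) \<and>
         (\<exists>c :: real^'n \<Rightarrow> real^'n. \<forall>p\<in>V. \<forall>k i j.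
            cov_deriv s F p k i j = c p $ k * F p $ i $ j)"
proof -
  define s where "s p = matrix_inv (Cbp C b p) *v (- b)" for p
  have inv: "\<And>p. p \<in> V \<Longrightarrow> invertible (Cbp C b p)" using dM invertible_det_nz by blast
  have Ms: "\<And>p. p \<in> V \<Longrightarrow> Cbp C b p *v s p = - b"
    unfolding s_def by (simp add: matrix_vector_mul_assoc invertible_Mi[OF inv])
  have loc: "\<And>p j k. p \<in> V \<Longrightarrow> (\<lambda>x. s x $ k) differentiable at p \<and>
      pd j (\<lambda>x. s x $ k) p = s p $ j * s p $ k"
    using local_s[OF V _ Ms inv] by blast
  have sm: "\<forall>k. smooth_fun_on (\<lambda>p. s p $ k) V"
    using smooth_riccati[OF V] loc by blast
  have cz: "\<forall>p\<in>V. \<forall>i j k l. curv s p i j k l = 0"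
    using curv_zero_riccati loc by blast
  obtain p1 where p1: "p1 \<in> V" using ne by blast
  have Heq: "\<And>p. p \<in> V \<Longrightarrow> Hm C b F p = (mu p / det (Cbp C b p)) *\<^sub>R A"
  proof -
    fix p assume p: "p \<in> V"
    have "det (Cbp C b p) *\<^sub>R Hm C b F p = mu p *\<^sub>R A"
      using tc[OF p] by (simp add: transf_coeff_def Hm_def)
    then show "Hm C b F p = (mu p / det (Cbp C b p)) *\<^sub>R A"
      using dM[OF p] by (metis (no_types, lifting) divide_inverse_commute inverse_eq_divide
          scaleR_one scaleR_scaleR right_inverse)
  qed
  have detH: "\<And>p. p \<in> V \<Longrightarrow> det (Hm C b F p) \<noteq> 0"
    using dM detF by (simp add: Hm_def det_mul)
  have Hnz: "\<And>p. p \<in> V \<Longrightarrow> Hm C b F p \<noteq> 0"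
  proof
    fix p assume p: "p \<in> V" and z: "Hm C b F p = 0"
    have "invertible (Hm C b F p)" using detH[OF p] invertible_det_nz by blast
    then show False using z mat1_nz unfolding invertible_def by auto
  qed
  have "A \<noteq> 0" using Heq[OF p1] Hnz[OF p1] by auto
  then obtain a e where Aae: "A $ a $ e \<noteq> 0" by (metis vec_eq_iff zero_index)
  have psinz: "\<And>p. p \<in> V \<Longrightarrow> mu p / det (Cbp C b p) \<noteq> 0"
    using Heq Hnz by force
  have Hae: "\<And>p. p \<in> V \<Longrightarrow> Hm C b F p $ a $ e \<noteq> 0"
    using Heq psinz Aae by simp
  have Hij: "\<And>p i j. p \<in> V \<Longrightarrow> Hm C b F p $ i $ j = (A $ i $ j / A $ a $ e) * Hm C b F p $ a $ e"
    using Heq Aae by simp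
  define c where "c p = (\<chi> k. pd k (\<lambda>q. Hm C b F q $ a $ e) p / Hm C b F p $ a $ e - 2 * s p $ k)" for p
  have cov: "cov_deriv s F p k i j = c p $ k * F p $ i $ j" if p: "p \<in> V" for p k i j
  proof -
    define \<rho> where "\<rho> = pd k (\<lambda>q. Hm C b F q $ a $ e) p / Hm C b F p $ a $ e"
    have dFp: "\<And>i j. (\<lambda>q. F q $ i $ j) differentiable at p" using dF p by blast
    have "dmat k (Hm C b F) p = \<rho> *\<^sub>R Hm C b F p"
    proof -
      have "pd k (\<lambda>q. Hm C b F q $ i $ j) p = \<rho> * Hm C b F p $ i $ j" for i j
      proof -
        have "pd k (\<lambda>q. Hm C b F q $ i $ j) p =
            pd k (\<lambda>q. (A $ i $ j / A $ a $ e) * Hm C b F q $ a $ e) p"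
          by (rule pd_local[OF V p]) (rule Hij)
        also have "\<dots> = (A $ i $ j / A $ a $ e) * pd k (\<lambda>q. Hm C b F q $ a $ e) p"
          by (rule pd_cmult[OF Hm_diff[OF dFp]])
        also have "\<dots> = \<rho> * Hm C b F p $ i $ j"
          unfolding \<rho>_def Hij[OF p, of i j] using Hae[OF p] by simp
        finally show ?thesis .
      qed
      then show ?thesis by (simp add: vec_eq_iff dmat_def)
    qed
    then have "Cbp C b p ** (dmat k F p - (\<rho> *\<^sub>R F p + outer (s p) (F p $ k) + outer (column k (F p)) (s p)))
      ** transpose (Cbp C b p) = 0"
      using dH_formula[OF dFp Ms[OF p], of k \<rho>] by simp
    then have "dmat k F p - (\<rho> *\<^sub>R F p + outer (s p) (F p $ k) + outer (column k (F p)) (s p)) = 0"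
      by (rule cancel_congr[OF inv[OF p]])
    then have "pd k (\<lambda>q. F q $ i $ j) p = \<rho> * F p $ i $ j + s p $ i * F p $ k $ j + F p $ i $ k * s p $ j"
      unfolding X_zero_iff by (simp add: dmat_def)
    then show ?thesis unfolding cov_formula c_def \<rho>_def by (simp add: algebra_simps)
  qed
  show ?thesis using sm cz cov by blast
qed



lemma fd_expand:
  fixes f :: "real^'n::finite \<Rightarrow> real"
  assumes "f differentiable at x"
  shows "frechet_derivative f (at x) h = (\<Sum>j\<in>UNIV. h$j * pd j f x)"
proof -
  have lin: "linear (frechet_derivative f (at x))"
    using has_derivative_linear[OF pd_diffw[OF assms]] .
  have "frechet_derivative f (at x) h = frechet_derivative f (at x) (\<Sum>j\<in>UNIV. h$j *\<^sub>R axis j 1)"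
    using basis_expansion[of h] by (simp add: scalar_mult_eq_scaleR)
  also have "\<dots> = (\<Sum>j\<in>UNIV. h$j * pd j f x)"
    by (simp add: linear_sum[OF lin] linear_scale[OF lin] pd_def o_def)
  finally show ?thesis .
qed

lemma const_on_ball:
  fixes f :: "real^'n::finite \<Rightarrow> real"
  assumes "\<And>x. x \<in> ball p0 r \<Longrightarrow> (f has_derivative (\<lambda>h. 0)) (at x)"
    and "x \<in> ball p0 r" and "0 < r"
  shows "f x = f p0"
proof -
  have "\<exists>c. \<forall>x\<in>ball p0 r. f x = c"
  proof (rule has_derivative_zero_constant)
    fix x assume "x \<in> ball p0 r"
    then show "(f has_derivative (\<lambda>h. 0)) (at x within ball p0 r)"
      using has_derivative_subset[OF assms(1)] by blast
  qed simp
  then show ?thesis using assms(2,3) by auto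
qed

lemma block_det_lower: "det (block_mat (mat 1 :: real^'n::finite^'n) 0 w 1) = 1"
proof -
  let ?I = "mat 1 :: real^('n + unit)^('n + unit)"
  define x where "x = (\<Sum>i\<in>UNIV. w$i *s row (Inl i) ?I)"
  have x_ent: "x $ t = (case t of Inl j \<Rightarrow> w$j | Inr _ \<Rightarrow> 0)" for t
    unfolding x_def
    by (cases t) (simp_all add: row_def mat_def if_distrib[of "\<lambda>u. _ * u"] cong: if_cong)
  have span: "x \<in> vec.span {row j ?I | j. j \<noteq> Inr ()}"
    unfolding x_def by (intro vec.span_sum vec.span_scale vec.span_base) auto
  have eq: "block_mat (mat 1) 0 w 1 = (\<chi> k. if k = Inr () then row (Inr ()) ?I + x else row k ?I)"
    by (simp add: vec_eq_iff block_mat_def row_def mat_def x_ent split: sum.splits)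
  show ?thesis unfolding eq det_row_span[OF span] by simp
qed

lemma block_transpose: "transpose (block_mat (mat 1 :: real^'n::finite^'n) b 0 1) = block_mat (mat 1) 0 b 1"
  by (simp add: vec_eq_iff block_mat_def transpose_def mat_def split: sum.splits)

lemma sum_UNIV_plus: "(\<Sum>t\<in>(UNIV :: ('a::finite + 'b::finite) set). f t) = (\<Sum>i\<in>UNIV. f (Inl i)) + (\<Sum>u\<in>UNIV. f (Inr u))"
  using sum.Plus[of "UNIV::'a set" "UNIV::'b set" f] by (simp add: o_def)

lemma block_factor:
  "block_mat (mat 1 + outer v p) (- v) (- p) 1 =
     block_mat (mat 1 :: real^'n::finite^'n) (- v) 0 1 ** block_mat (mat 1) 0 (- p) 1"
  by (simp add: vec_eq_iff block_mat_def matrix_matrix_mult_def sum_UNIV_plus mat_def outer_def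
      if_distrib[of "\<lambda>u. u * _"] if_distrib[of "\<lambda>u. _ * u"] split: sum.splits cong: if_cong)

lemma block_det_one:
  fixes v p :: "real^'n::finite"
  shows "det (block_mat (mat 1 + outer v p) (- v) (- p) (1::real)) = 1"
proof -
  have "det (block_mat (mat 1 :: real^'n::finite^'n) (- v) 0 1) = 1"
    using block_det_lower[of "- v"] block_transpose[of "- v"] det_transpose by metis
  then show ?thesis unfolding block_factor det_mul using block_det_lower by simp
qed



lemma dnth_at: "((\<lambda>x. x $ m) has_derivative (\<lambda>h. h $ m)) (at q)"
  by (rule bounded_linear_imp_has_derivative) (rule bounded_linear_vec_nth)

lemma Cbp_p0: "Cbp (mat 1 + outer v p0) (- v) p0 = mat 1"
  by (simp add: vec_eq_iff Cbp_def mat_def outer_def)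

lemma backward:
  fixes F :: "real^'n::finite \<Rightarrow> real^'n^'n" and s c :: "real^'n \<Rightarrow> real^'n"
  assumes c2: "CARD('n) \<ge> 2" and V: "open V" and p0: "p0 \<in> V"
    and dF: "\<And>p i j. p \<in> V \<Longrightarrow> (\<lambda>q. F q $ i $ j) differentiable at p"
    and detF: "\<And>p. p \<in> V \<Longrightarrow> det (F p) \<noteq> 0"
    and ds: "\<And>p k. p \<in> V \<Longrightarrow> (\<lambda>q. s q $ k) differentiable at p"
    and cz: "\<And>p i j k l. p \<in> V \<Longrightarrow> curv s p i j k l = 0"
    and cv: "\<And>p k i j. p \<in> V \<Longrightarrow> cov_deriv s F p k i j = c p $ k * F p $ i $ j"
  shows "\<exists>W. open W \<and> p0 \<in> W \<and> W \<subseteq> V \<and>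
       (\<exists>C b c \<beta>. det (block_mat C b c \<beta>) = 1 \<and>
         (\<exists>(A::real^'n^'n) (mu::real^'n \<Rightarrow> real). \<forall>p\<in>W.
             det (Cbp C b p) \<noteq> 0 \<and> transf_coeff C b (F p) p = mu p *\<^sub>R A))"
proof -
  have ric: "\<And>p j k. p \<in> V \<Longrightarrow> pd j (\<lambda>q. s q $ k) p = s p $ j * s p $ k"
    using riccati_from_curv[OF c2] ds cz by blast
  define v0 where "v0 = s p0"
  define C where "C = mat 1 + outer v0 p0"
  define b where "b = - v0"
  define M where "M x = Cbp C b x" for x
  define H where "H = Hm C b F"
  define D where "D x = 1 + (\<Sum>m\<in>UNIV. s x $ m * (x $ m - p0 $ m))" for x
  have Mp0: "M p0 = mat 1" unfolding M_def C_def b_def by (rule Cbp_p0)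
  have Hp0: "H p0 = F p0" unfolding H_def Hm_def using Mp0 by (simp add: M_def)
  have "F p0 \<noteq> 0"
  proof
    assume z: "F p0 = 0"
    have "invertible (F p0)" using detF[OF p0] invertible_det_nz by blast
    then show False using z mat1_nz unfolding invertible_def by auto
  qed
  then obtain a e where Fae: "F p0 $ a $ e \<noteq> 0" by (metis vec_eq_iff zero_index)
  have Hae0: "H p0 $ a $ e \<noteq> 0" using Fae Hp0 by simp
  have dD: "(D has_derivative (\<lambda>h. 0 + (\<Sum>m\<in>UNIV. s x $ m * (h $ m - 0)
        + frechet_derivative (\<lambda>q. s q $ m) (at x) h * (x $ m - p0 $ m)))) (at x)"
    if x: "x \<in> V" for x
    unfolding D_def
    by (intro has_derivative_add has_derivative_const has_derivative_sum has_derivative_mult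
        has_derivative_diff dnth_at pd_diffw ds x)
  have Dcont: "continuous_on V D"
  proof (intro continuous_at_imp_continuous_on ballI)
    fix x assume "x \<in> V"
    then show "isCont D x" by (rule has_derivative_continuous[OF dD])
  qed
  have Hcont: "continuous_on V (\<lambda>x. H x $ a $ e)"
  proof (intro continuous_at_imp_continuous_on ballI)
    fix x assume x: "x \<in> V"
    have "(\<lambda>x. H x $ a $ e) differentiable at x" unfolding H_def by (rule Hm_diff[OF dF[OF x]])
    then show "isCont (\<lambda>x. H x $ a $ e) x" by (rule has_derivative_continuous[OF pd_diffw])
  qed
  have detcont: "continuous_on UNIV (\<lambda>x. det (M x))"
    unfolding M_def det_def Cbp_def vec_lambda_beta by (intro continuous_intros)
  define W0 where "W0 = (D -` {0<..} \<inter> V) \<inter> ((\<lambda>x. H x $ a $ e) -` (- {0}) \<inter> V)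
     \<inter> ((\<lambda>x. det (M x)) -` (- {0}) \<inter> UNIV)"
  have o1: "\<forall>B. open B \<longrightarrow> open (D -` B \<inter> V)"
    using continuous_on_open_vimage[OF V] Dcont by blast
  have o2: "\<forall>B. open B \<longrightarrow> open ((\<lambda>x. H x $ a $ e) -` B \<inter> V)"
    using continuous_on_open_vimage[OF V] Hcont by blast
  have o3: "\<forall>B. open B \<longrightarrow> open ((\<lambda>x. det (M x)) -` B \<inter> UNIV)"
    using continuous_on_open_vimage[OF open_UNIV] detcont by blast
  have oc: "open (- {0::real})" by (simp add: open_Compl)
  have W0: "open W0" unfolding W0_def
    by (intro open_Int o1[rule_format] o2[rule_format] o3[rule_format] oc open_greaterThan)
  have D0: "D p0 = 1" by (simp add: D_def)
  have p0W0: "p0 \<in> W0" unfolding W0_def using p0 D0 Hae0 Mp0 by simp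
  obtain r where r: "0 < r" "ball p0 r \<subseteq> W0" using open_contains_ball W0 p0W0 by blast
  let ?B = "ball p0 r"
  have BV: "?B \<subseteq> V" using r unfolding W0_def by blast
  have Bpos: "\<And>x. x \<in> ?B \<Longrightarrow> 0 < D x" using r unfolding W0_def by blast
  have BH: "\<And>x. x \<in> ?B \<Longrightarrow> H x $ a $ e \<noteq> 0" using r unfolding W0_def by blast
  have Bdet: "\<And>x. x \<in> ?B \<Longrightarrow> det (M x) \<noteq> 0" using r unfolding W0_def by blast
  have sB: "s x $ k = D x * v0 $ k" if x: "x \<in> ?B" for x k
  proof -
    have "s x $ k / D x = s p0 $ k / D p0"
    proof (rule const_on_ball[OF _ x r(1)])
      fix y assume y: "y \<in> ?B"
      have yV: "y \<in> V" using y BV by blast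
      have Dy: "D y \<noteq> 0" using Bpos[OF y] by simp
      define \<sigma> where "\<sigma> h = (\<Sum>j\<in>UNIV. h $ j * s y $ j)" for h
      have fds: "frechet_derivative (\<lambda>q. s q $ m) (at y) h = s y $ m * \<sigma> h" for m h
        unfolding fd_expand[OF ds[OF yV]] ric[OF yV] \<sigma>_def
        by (simp add: sum_distrib_left mult_ac)
      have hD: "(\<Sum>m\<in>UNIV. s y $ m * (h $ m - 0)
          + frechet_derivative (\<lambda>q. s q $ m) (at y) h * (y $ m - p0 $ m)) = \<sigma> h * D y" for h
        unfolding fds D_def \<sigma>_def
        by (simp add: sum.distrib sum_distrib_left algebra_simps sum_subtractf)
      have "((\<lambda>q. s q $ k / D q) has_derivative
          (\<lambda>h. (frechet_derivative (\<lambda>q. s q $ k) (at y) h * D y - s y $ k *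
             (0 + (\<Sum>m\<in>UNIV. s y $ m * (h $ m - 0)
              + frechet_derivative (\<lambda>q. s q $ m) (at y) h * (y $ m - p0 $ m)))) / (D y * D y))) (at y)"
        by (rule has_derivative_divide'[OF pd_diffw[OF ds[OF yV]] dD[OF yV] Dy])
      moreover have "(\<lambda>h. (frechet_derivative (\<lambda>q. s q $ k) (at y) h * D y - s y $ k *
             (0 + (\<Sum>m\<in>UNIV. s y $ m * (h $ m - 0)
              + frechet_derivative (\<lambda>q. s q $ m) (at y) h * (y $ m - p0 $ m)))) / (D y * D y)) = (\<lambda>h. 0)"
        unfolding hD by (simp add: fds)
      ultimately show "((\<lambda>q. s q $ k / D q) has_derivative (\<lambda>h. 0)) (at y)" by simp
    qed
    then have "s x $ k / D x = v0 $ k" by (simp add: D0 v0_def)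
    then show ?thesis using Bpos[OF x] by (simp add: field_simps)
  qed
  have MsB: "M x *v s x = - b" if x: "x \<in> ?B" for x
  proof -
    have sx: "s x = D x *\<^sub>R v0" using sB[OF x] by (simp add: vec_eq_iff)
    have "M x *v s x = M p0 *v s x + (\<Sum>j\<in>UNIV. s x $ j * (x $ j - p0 $ j)) *\<^sub>R b"
      unfolding M_def by (rule Cbp_mv)
    also have "\<dots> = s x + (D x - 1) *\<^sub>R b" unfolding Mp0 by (simp add: D_def)
    also have "\<dots> = - b" unfolding sx b_def by (simp add: algebra_simps)
    finally show ?thesis .
  qed
  have dHB: "dmat k H x = (c x $ k + 2 * s x $ k) *\<^sub>R H x" if x: "x \<in> ?B" for x k
  proof -
    have xV: "x \<in> V" using x BV by blast
    have dFx: "\<And>i j. (\<lambda>q. F q $ i $ j) differentiable at x" using dF xV by blast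
    have "dmat k F x - ((c x $ k + 2 * s x $ k) *\<^sub>R F x + outer (s x) (F x $ k) + outer (column k (F x)) (s x)) = 0"
      unfolding X_zero_iff dmat_def
    proof (intro allI)
      fix i j
      have "cov_deriv s F x k i j = c x $ k * F x $ i $ j" by (rule cv[OF xV])
      then show "(\<chi> i j. pd k (\<lambda>q. F q $ i $ j) x) $ i $ j =
        (c x $ k + 2 * s x $ k) * F x $ i $ j + s x $ i * F x $ k $ j + F x $ i $ k * s x $ j"
        unfolding cov_formula by (simp add: algebra_simps)
    qed
    then have "dmat k H x - (c x $ k + 2 * s x $ k) *\<^sub>R H x = 0"
      using dH_formula[OF dFx MsB[OF x, unfolded M_def], of k "c x $ k + 2 * s x $ k"]
      unfolding H_def by simp
    then show ?thesis by simp
  qed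
  have ratio: "H x $ i $ j / H x $ a $ e = H p0 $ i $ j / H p0 $ a $ e" if x: "x \<in> ?B" for x i j
  proof (rule const_on_ball[OF _ x r(1)])
    fix y assume y: "y \<in> ?B"
    have yV: "y \<in> V" using y BV by blast
    have dFy: "\<And>i j. (\<lambda>q. F q $ i $ j) differentiable at y" using dF yV by blast
    have dHy: "\<And>i j. (\<lambda>q. H q $ i $ j) differentiable at y" unfolding H_def by (rule Hm_diff[OF dFy])
    define \<tau> where "\<tau> h = (\<Sum>k\<in>UNIV. h $ k * (c y $ k + 2 * s y $ k))" for h
    have fdH: "frechet_derivative (\<lambda>q. H q $ i' $ j') (at y) h = \<tau> h * H y $ i' $ j'" for i' j' h
    proof -
      have "\<And>k. pd k (\<lambda>q. H q $ i' $ j') y = (c y $ k + 2 * s y $ k) * H y $ i' $ j'"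
        using dHB[OF y] by (simp add: vec_eq_iff dmat_def)
      then show ?thesis unfolding fd_expand[OF dHy] \<tau>_def by (simp add: sum_distrib_left mult_ac)
    qed
    have "((\<lambda>q. H q $ i $ j / H q $ a $ e) has_derivative
       (\<lambda>h. (frechet_derivative (\<lambda>q. H q $ i $ j) (at y) h * H y $ a $ e - H y $ i $ j *
          frechet_derivative (\<lambda>q. H q $ a $ e) (at y) h) / (H y $ a $ e * H y $ a $ e))) (at y)"
      by (rule has_derivative_divide'[OF pd_diffw[OF dHy] pd_diffw[OF dHy] BH[OF y]])
    then show "((\<lambda>q. H q $ i $ j / H q $ a $ e) has_derivative (\<lambda>h. 0)) (at y)"
      unfolding fdH by simp
  qed
  define mu where "mu x = det (M x) * (H x $ a $ e / H p0 $ a $ e)" for x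
  have tcB: "transf_coeff C b (F x) x = mu x *\<^sub>R H p0" if x: "x \<in> ?B" for x
  proof -
    obtain \<kappa> where \<kappa>: "\<kappa> = H x $ a $ e / H p0 $ a $ e" by blast
    have Hx: "H x = \<kappa> *\<^sub>R H p0"
    proof -
      have "H x $ i $ j = \<kappa> * H p0 $ i $ j" for i j
      proof -
        have r1: "H x $ i $ j / H x $ a $ e = H p0 $ i $ j / H p0 $ a $ e" by (rule ratio[OF x])
        have "H x $ i $ j = (H p0 $ i $ j / H p0 $ a $ e) * H x $ a $ e"
          using r1 BH[OF x] by (simp add: divide_eq_eq)
        then show ?thesis unfolding \<kappa> by simp
      qed
      then show ?thesis by (simp add: vec_eq_iff)
    qed
    have e: "transf_coeff C b (F x) x = det (M x) *\<^sub>R H x"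
      by (simp add: transf_coeff_def H_def Hm_def M_def)
    show ?thesis unfolding e mu_def Hx using Hae0 by simp
  qed
  show ?thesis
  proof (intro exI conjI)
    show "open ?B" by simp
    show "p0 \<in> ?B" using r by simp
    show "?B \<subseteq> V" by (rule BV)
    show "det (block_mat C b (- p0) 1) = 1" unfolding C_def b_def by (rule block_det_one)
    show "\<forall>p\<in>?B. det (Cbp C b p) \<noteq> 0 \<and> transf_coeff C b (F p) p = mu p *\<^sub>R H p0"
      using Bdet tcB unfolding M_def by blast
  qed
qed



lemma smooth_diff: "smooth_fun_on f U \<Longrightarrow> p \<in> U \<Longrightarrow> f differentiable at p"
  unfolding smooth_fun_on_def by (drule spec[where x="[]"]) simp

theorem mainTheorem6:
  fixes F :: "real^'n \<Rightarrow> real^'n^'n" and U :: "(real^'n) set" and p0 :: "real^'n"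
  assumes "CARD('n) \<ge> 2"
    and "open U"
    and "\<And>i j. smooth_fun_on (\<lambda>p. F p $ i $ j) U"
    and "\<And>p. p \<in> U \<Longrightarrow> transpose (F p) = F p"
    and "\<And>p. p \<in> U \<Longrightarrow> det (F p) \<noteq> 0"
    and "p0 \<in> U"
  shows "linearizable_near F U p0 \<longleftrightarrow>
    (\<exists>V. open V \<and> p0 \<in> V \<and> V \<subseteq> U \<and>
      (\<exists>s :: real^'n \<Rightarrow> real^'n. (\<forall>k. smooth_fun_on (\<lambda>p. s p $ k) V) \<and>
         (\<forall>p\<in>V. \<forall>i j k l. curv s p i j k l = 0) \<and>
         (\<exists>c :: real^'n \<Rightarrow> real^'n. \<forall>p\<in>V. \<forall>k i j.
            cov_deriv s F p k i j = c p $ k * F p $ i $ j)))"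
proof
  assume "linearizable_near F U p0"
  then obtain V C b c \<beta> A mu where V: "open V" "p0 \<in> V" "V \<subseteq> U"
    and h: "\<forall>p\<in>V. det (Cbp C b p) \<noteq> 0 \<and> transf_coeff C b (F p) p = mu p *\<^sub>R A"
    unfolding linearizable_near_def by blast
  have dF: "\<And>p i j. p \<in> V \<Longrightarrow> (\<lambda>q. F q $ i $ j) differentiable at p"
  proof -
    fix p i j assume "p \<in> V"
    then have "p \<in> U" using V(3) by blast
    then show "(\<lambda>q. F q $ i $ j) differentiable at p" by (rule smooth_diff[OF assms(3)])
  qed
  have dM: "\<And>p. p \<in> V \<Longrightarrow> det (Cbp C b p) \<noteq> 0" using h by blast
  have tc: "\<And>p. p \<in> V \<Longrightarrow> transf_coeff C b (F p) p = mu p *\<^sub>R A" using h by blast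
  have detF: "\<And>p. p \<in> V \<Longrightarrow> det (F p) \<noteq> 0"
  proof -
    fix p assume "p \<in> V"
    then have "p \<in> U" using V(3) by blast
    then show "det (F p) \<noteq> 0" by (rule assms(5))
  qed
  have ne: "V \<noteq> {}" using V(2) by blast
  have ex: "\<exists>s :: real^'n \<Rightarrow> real^'n. (\<forall>k. smooth_fun_on (\<lambda>p. s p $ k) V) \<and>
         (\<forall>p\<in>V. \<forall>i j k l. curv s p i j k l = 0) \<and>
         (\<exists>c :: real^'n \<Rightarrow> real^'n. \<forall>p\<in>V. \<forall>k i j.
            cov_deriv s F p k i j = c p $ k * F p $ i $ j)"
    by (rule forward[OF V(1) dM tc dF detF ne])
  show "\<exists>V. open V \<and> p0 \<in> V \<and> V \<subseteq> U \<and>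
      (\<exists>s :: real^'n \<Rightarrow> real^'n. (\<forall>k. smooth_fun_on (\<lambda>p. s p $ k) V) \<and>
         (\<forall>p\<in>V. \<forall>i j k l. curv s p i j k l = 0) \<and>
         (\<exists>c :: real^'n \<Rightarrow> real^'n. \<forall>p\<in>V. \<forall>k i j.
            cov_deriv s F p k i j = c p $ k * F p $ i $ j))"
    by (intro exI[of _ V] conjI V(1) V(2) V(3) ex)
next
  assume "\<exists>V. open V \<and> p0 \<in> V \<and> V \<subseteq> U \<and>
      (\<exists>s :: real^'n \<Rightarrow> real^'n. (\<forall>k. smooth_fun_on (\<lambda>p. s p $ k) V) \<and>
         (\<forall>p\<in>V. \<forall>i j k l. curv s p i j k l = 0) \<and>
         (\<exists>c :: real^'n \<Rightarrow> real^'n. \<forall>p\<in>V. \<forall>k i j.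
            cov_deriv s F p k i j = c p $ k * F p $ i $ j))"
  then obtain V where VV: "open V \<and> p0 \<in> V \<and> V \<subseteq> U \<and>
      (\<exists>s :: real^'n \<Rightarrow> real^'n. (\<forall>k. smooth_fun_on (\<lambda>p. s p $ k) V) \<and>
         (\<forall>p\<in>V. \<forall>i j k l. curv s p i j k l = 0) \<and>
         (\<exists>c :: real^'n \<Rightarrow> real^'n. \<forall>p\<in>V. \<forall>k i j.
            cov_deriv s F p k i j = c p $ k * F p $ i $ j))" ..
  have V1: "open V" using VV by (rule conjunct1)
  have V2: "p0 \<in> V" using VV[THEN conjunct2] by (rule conjunct1)
  have V3: "V \<subseteq> U" using VV[THEN conjunct2, THEN conjunct2] by (rule conjunct1)
  have V4: "\<exists>s :: real^'n \<Rightarrow> real^'n. (\<forall>k. smooth_fun_on (\<lambda>p. s p $ k) V) \<and>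
         (\<forall>p\<in>V. \<forall>i j k l. curv s p i j k l = 0) \<and>
         (\<exists>c :: real^'n \<Rightarrow> real^'n. \<forall>p\<in>V. \<forall>k i j.
            cov_deriv s F p k i j = c p $ k * F p $ i $ j)"
    using VV[THEN conjunct2, THEN conjunct2] by (rule conjunct2)
  then obtain s :: "real^'n \<Rightarrow> real^'n" where ss: "(\<forall>k. smooth_fun_on (\<lambda>p. s p $ k) V) \<and>
         (\<forall>p\<in>V. \<forall>i j k l. curv s p i j k l = 0) \<and>
         (\<exists>c :: real^'n \<Rightarrow> real^'n. \<forall>p\<in>V. \<forall>k i j.
            cov_deriv s F p k i j = c p $ k * F p $ i $ j)" ..
  have sm: "\<forall>k. smooth_fun_on (\<lambda>p. s p $ k) V" using ss by (rule conjunct1)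
  have cz: "\<forall>p\<in>V. \<forall>i j k l. curv s p i j k l = 0" using ss[THEN conjunct2] by (rule conjunct1)
  have cex: "\<exists>c :: real^'n \<Rightarrow> real^'n. \<forall>p\<in>V. \<forall>k i j.
            cov_deriv s F p k i j = c p $ k * F p $ i $ j" using ss[THEN conjunct2] by (rule conjunct2)
  then obtain c :: "real^'n \<Rightarrow> real^'n" where
    cv: "\<forall>p\<in>V. \<forall>k i j. cov_deriv s F p k i j = c p $ k * F p $ i $ j" ..
  have dF: "\<And>p i j. p \<in> V \<Longrightarrow> (\<lambda>q. F q $ i $ j) differentiable at p"
  proof -
    fix p i j assume "p \<in> V"
    then have "p \<in> U" using V3 by blast
    then show "(\<lambda>q. F q $ i $ j) differentiable at p" by (rule smooth_diff[OF assms(3)])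
  qed
  have detF: "\<And>p. p \<in> V \<Longrightarrow> det (F p) \<noteq> 0"
  proof -
    fix p assume "p \<in> V"
    then have "p \<in> U" using V3 by blast
    then show "det (F p) \<noteq> 0" by (rule assms(5))
  qed
  have ds: "\<And>p k. p \<in> V \<Longrightarrow> (\<lambda>q. s q $ k) differentiable at p"
  proof -
    fix p k assume "p \<in> V"
    then show "(\<lambda>q. s q $ k) differentiable at p" by (rule smooth_diff[OF sm[rule_format]])
  qed
  have cz': "\<And>p i j k l. p \<in> V \<Longrightarrow> curv s p i j k l = 0" using cz by blast
  have cv': "\<And>p k i j. p \<in> V \<Longrightarrow> cov_deriv s F p k i j = c p $ k * F p $ i $ j" using cv by blast
  have bw: "\<exists>W. open W \<and> p0 \<in> W \<and> W \<subseteq> V \<and>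
       (\<exists>C b c \<beta>. det (block_mat C b c \<beta>) = 1 \<and>
         (\<exists>(A::real^'n^'n) (mu::real^'n \<Rightarrow> real). \<forall>p\<in>W.
             det (Cbp C b p) \<noteq> 0 \<and> transf_coeff C b (F p) p = mu p *\<^sub>R A))"
    by (rule backward[OF assms(1) V1 V2 dF detF ds cz' cv'])
  then obtain W where WW: "open W \<and> p0 \<in> W \<and> W \<subseteq> V \<and>
       (\<exists>C b c \<beta>. det (block_mat C b c \<beta>) = 1 \<and>
         (\<exists>(A::real^'n^'n) (mu::real^'n \<Rightarrow> real). \<forall>p\<in>W.
             det (Cbp C b p) \<noteq> 0 \<and> transf_coeff C b (F p) p = mu p *\<^sub>R A))" ..
  have W1: "open W" using WW by (rule conjunct1)
  have W2: "p0 \<in> W" using WW[THEN conjunct2] by (rule conjunct1)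
  have W3: "W \<subseteq> V" using WW[THEN conjunct2, THEN conjunct2] by (rule conjunct1)
  have rest: "\<exists>C b c \<beta>. det (block_mat C b c \<beta>) = 1 \<and>
         (\<exists>(A::real^'n^'n) (mu::real^'n \<Rightarrow> real). \<forall>p\<in>W.
             det (Cbp C b p) \<noteq> 0 \<and> transf_coeff C b (F p) p = mu p *\<^sub>R A)"
    using WW[THEN conjunct2, THEN conjunct2] by (rule conjunct2)
  have WU: "W \<subseteq> U" using W3 V3 by (rule subset_trans)
  show "linearizable_near F U p0"
    unfolding linearizable_near_def by (intro exI[of _ W] conjI W1 W2 WU rest)
qed


end
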